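(* Let $G$ be a connected undirected graph on $N\ge2$ nodes with adjacency matrix $A=(a_{ij})$, neighborhoods $\mathcal N_i=\{j:a_{ij}=1\}$, degrees $d_i=\sum_j a_{ij}$ and Laplacian $L=D-A$, $D=\mathrm{diag}(d_1,\dots,d_N)$. Let $w=(w_1,\dots,w_N)^T$ with $w_i>0$ for all $i$. Define the matrix $T$ by $T_{ii}=\big(\sum_{j\in\mathcal N_i}w_j\big)/l_{ii}$ and $T_{ij}=w_j$ for $i\ne j$, and let $\hat W=I-\epsilon\,(T\otimes L)$, where $\otimes$ is entrywise (Hadamard) multiplication. If $0<\epsilon<1/\max_i\big(\sum_{j\in\mathcal N_i}w_j\big)$, then: (1) $\hat W$ is a nonnegative matrix having $w$ as a left eigenvector and $\vec 1=(1,\dots,1)^T$ as a right eigenvector, both for eigenvalue $1$; (2) all eigenvalues of $\hat W$ lie in the closed unit disk; (3) $\hat W$ is primitive.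
   Context: $l_{ii}=d_i$ is the $i$-th diagonal entry of $L$. A matrix is primitive if it is nonnegative and some positive integer power of it has all entries positive. *)

theory Defs
  imports "HOL-Analysis.Analysis"
begin

text \<open>Matrices are square, indexed by a finite type 'n with N = CARD('n) nodes.\<close>

primrec matpow :: "'a::comm_ring_1^'n^'n \<Rightarrow> nat \<Rightarrow> 'a^'n^'n" where
  "matpow M 0 = mat 1"
| "matpow M (Suc k) = M ** matpow M k"

definition nonneg_matrix :: "real^'n^'n \<Rightarrow> bool" where
  "nonneg_matrix M \<longleftrightarrow> (\<forall>i j. M $ i $ j \<ge> 0)"

definition primitive_matrix :: "real^'n^'n \<Rightarrow> bool" where
  "primitive_matrix M \<longleftrightarrow> nonneg_matrix M \<and>
     (\<exists>k::nat. k > 0 \<and> (\<forall>i j. matpow M k $ i $ j > 0))"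

definition complex_matrix :: "real^'n^'n \<Rightarrow> complex^'n^'n" where
  "complex_matrix M = (\<chi> i j. complex_of_real (M $ i $ j))"

definition is_eigenvalue :: "real^'n^'n \<Rightarrow> complex \<Rightarrow> bool" where
  "is_eigenvalue M \<mu> \<longleftrightarrow> (\<exists>v::complex^'n. v \<noteq> 0 \<and> complex_matrix M *v v = \<mu> *s v)"

definition adjacency_matrix :: "real^'n^'n \<Rightarrow> bool" where
  "adjacency_matrix A \<longleftrightarrow> (\<forall>i j. A $ i $ j = 0 \<or> A $ i $ j = 1) \<and>
     (\<forall>i j. A $ i $ j = A $ j $ i) \<and> (\<forall>i. A $ i $ i = 0)"

definition connected_graph :: "real^'n^'n \<Rightarrow> bool" where
  "connected_graph A \<longleftrightarrow> (\<forall>i j. (i, j) \<in> {(k, l). A $ k $ l = 1}\<^sup>*)"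

definition neighbors :: "real^'n^'n \<Rightarrow> 'n \<Rightarrow> 'n set" where
  "neighbors A i = {j. A $ i $ j = 1}"

definition degree :: "real^'n^'n \<Rightarrow> 'n \<Rightarrow> real" where
  "degree A i = (\<Sum>j\<in>UNIV. A $ i $ j)"

definition laplacian :: "real^'n^'n \<Rightarrow> real^'n^'n" where
  "laplacian A = (\<chi> i j. (if i = j then degree A i else 0) - A $ i $ j)"

definition Tmat :: "real^'n^'n \<Rightarrow> real^'n \<Rightarrow> real^'n^'n" where
  "Tmat A w = (\<chi> i j. if i = j then (\<Sum>k\<in>neighbors A i. w $ k) / laplacian A $ i $ i
                       else w $ j)"

definition hadamard :: "real^'n^'n \<Rightarrow> real^'n^'n \<Rightarrow> real^'n^'n" where
  "hadamard M P = (\<chi> i j. M $ i $ j * P $ i $ j)"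

definition What :: "real \<Rightarrow> real^'n^'n \<Rightarrow> real^'n \<Rightarrow> real^'n^'n" where
  "What \<epsilon> A w = mat 1 - \<epsilon> *\<^sub>R hadamard (Tmat A w) (laplacian A)"

end

theory Submission
  imports Defs
begin

lemma matpow_nonneg:
  assumes "nonneg_matrix W"
  shows "matpow W m $ i $ j \<ge> 0"
proof (induction m arbitrary: i j)
  case 0 then show ?case by (simp add: mat_def)
next
  case (Suc m)
  have "\<And>k. W $ i $ k * matpow W m $ k $ j \<ge> 0"
    using assms Suc.IH unfolding nonneg_matrix_def by simp
  then show ?case by (simp add: matrix_matrix_mult_def sum_nonneg)
qed

lemma matpow_pos:
  assumes nn: "nonneg_matrix W" and diag: "\<And>i. W $ i $ i > 0"
    and edge: "\<And>i j. (i, j) \<in> R \<Longrightarrow> W $ i $ j > 0"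
  shows "(i, j) \<in> R ^^ n \<Longrightarrow> n \<le> m \<Longrightarrow> matpow W m $ i $ j > 0"
proof (induction m arbitrary: i n)
  case 0 then show ?case by (simp add: mat_def)
next
  case (Suc m)
  note IH = Suc.IH and pr = Suc.prems
  obtain l where l1: "W $ i $ l > 0" and l2: "matpow W m $ l $ j > 0"
  proof (cases n)
    case 0
    then have "i = j" using pr by simp
    then show ?thesis using that[of j] diag IH[of j 0] 0 by simp
  next
    case (Suc n')
    then obtain l where a: "(i, l) \<in> R" and b: "(l, j) \<in> R ^^ n'"
      using pr relpow_Suc_D2 by metis
    have "n' \<le> m" using pr(2) Suc by simp
    then show ?thesis using that[of l] edge[OF a] IH[OF b] by auto
  qed
  have nnt: "\<And>k. W $ i $ k * matpow W m $ k $ j \<ge> 0"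
    using nn matpow_nonneg[OF nn] unfolding nonneg_matrix_def by simp
  have "0 < W $ i $ l * matpow W m $ l $ j" using l1 l2 by simp
  also have "\<dots> \<le> (\<Sum>k\<in>UNIV. W $ i $ k * matpow W m $ k $ j)"
    by (rule member_le_sum) (use nnt in auto)
  finally show ?case by (simp add: matrix_matrix_mult_def)
qed

theorem lemma3:
  fixes A :: "real^'n^'n" and w :: "real^'n" and \<epsilon> :: real
  assumes "CARD('n) \<ge> 2"
    and "adjacency_matrix A"
    and "connected_graph A"
    and "\<forall>i. w $ i > 0"
    and "0 < \<epsilon>"
    and "\<epsilon> < 1 / Max (range (\<lambda>i. \<Sum>j\<in>neighbors A i. w $ j))"
  shows "nonneg_matrix (What \<epsilon> A w) \<and>
         w v* What \<epsilon> A w = w \<and>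
         What \<epsilon> A w *v vec 1 = vec 1 \<and>
         (\<forall>\<mu>. is_eigenvalue (What \<epsilon> A w) \<mu> \<longrightarrow> cmod \<mu> \<le> 1) \<and>
         primitive_matrix (What \<epsilon> A w)"
proof -
  note adj = assms(2)[unfolded adjacency_matrix_def]
  define s where "s i = (\<Sum>j\<in>neighbors A i. w $ j)" for i
  define W where "W = What \<epsilon> A w"
  define R where "R = {(k, l). A $ k $ l = (1::real)}"
  have s_eq: "s i = (\<Sum>j\<in>UNIV. A $ i $ j * w $ j)" for i
  proof -
    have "s i = (\<Sum>j\<in>UNIV. if A $ i $ j = 1 then w $ j else 0)"
      unfolding s_def neighbors_def using sum.inter_filter[of UNIV "\<lambda>j. w $ j" "\<lambda>j. A $ i $ j = 1"]
      by simp
    also have "\<dots> = (\<Sum>j\<in>UNIV. A $ i $ j * w $ j)"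
      by (rule sum.cong) (use adj in \<open>auto\<close>)
    finally show ?thesis .
  qed
  have nbr: "\<exists>l. A $ i $ l = 1" for i
  proof -
    have "\<exists>j::'n. j \<noteq> i"
    proof (rule ccontr)
      assume "\<not> ?thesis"
      then have "UNIV = {i}" by auto
      then have "CARD('n) = card {i}" by (metis)
      then have "CARD('n) = 1" by simp
      then show False using assms(1) by simp
    qed
    then obtain j where "j \<noteq> i" by blast
    moreover have "(i, j) \<in> R\<^sup>*" using assms(3) unfolding connected_graph_def R_def by simp
    then show ?thesis
    proof (cases rule: converse_rtranclE)
      case base then show ?thesis using \<open>j \<noteq> i\<close> by simp
    next
      case (step l) then show ?thesis unfolding R_def by auto
    qed
  qed
  have deg_pos: "degree A i > 0" for i
  proof -
    obtain l where l: "A $ i $ l = 1" using nbr by blast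
    have "1 \<le> (\<Sum>j\<in>UNIV. A $ i $ j)"
      using member_le_sum[of l UNIV "\<lambda>j. A $ i $ j"] l adj
      by (metis UNIV_I finite dual_order.refl zero_le_one)
    then show ?thesis unfolding degree_def by simp
  qed
  have s_pos: "s i > 0" for i
  proof -
    obtain l where l: "A $ i $ l = 1" using nbr by blast
    have "A $ i $ j * w $ j \<ge> 0" for j using adj assms(4) by (metis less_eq_real_def mult_eq_0_iff mult_nonneg_nonneg zero_le_one)
    then have "A $ i $ l * w $ l \<le> s i" unfolding s_eq by (intro member_le_sum) auto
    then show ?thesis using l assms(4) by (metis less_le_trans mult_1)
  qed
  define M where "M = Max (range s)"
  have sM: "s i \<le> M" for i unfolding M_def by simp
  have Mpos: "M > 0" using sM s_pos by (meson less_le_trans)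
  have eM: "\<epsilon> * M < 1" using assms(6) Mpos unfolding M_def s_def[abs_def]
    by (simp add: field_simps)
  have es: "\<epsilon> * s i < 1" for i
    using eM sM[of i] assms(5) by (smt (verit) mult_left_mono)
  have Wij: "W $ i $ j = (if i = j then 1 - \<epsilon> * s i else \<epsilon> * w $ j * A $ i $ j)" for i j
  proof (cases "i = j")
    case True
    have "degree A i \<noteq> 0" using deg_pos[of i] by simp
    then show ?thesis using True adj
      unfolding W_def What_def hadamard_def Tmat_def laplacian_def s_def
      by (simp add: mat_def)
  next
    case False
    then show ?thesis unfolding W_def What_def hadamard_def Tmat_def laplacian_def
      by (simp add: mat_def)
  qed
  have Wij2: "W $ i $ j = (if i = j then 1 else 0) - \<epsilon> * (if i = j then s i else 0) + \<epsilon> * (w $ j * A $ i $ j)" for i j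
    using Wij[of i j] adj by auto
  have nn: "nonneg_matrix W"
    unfolding nonneg_matrix_def
  proof (intro allI)
    fix i j show "0 \<le> W $ i $ j"
      using Wij[of i j] es[of i] adj assms(4,5)
      by (smt (verit) mult_nonneg_nonneg)
  qed
  have diag: "W $ i $ i > 0" for i using Wij es by simp
  have edge: "(i, j) \<in> R \<Longrightarrow> W $ i $ j > 0" for i j
    using Wij[of i j] diag[of i] assms(4,5) unfolding R_def by auto
  have row: "(\<Sum>j\<in>UNIV. W $ i $ j) = 1" for i
  proof -
    have "(\<Sum>j\<in>UNIV. W $ i $ j) = (\<Sum>j\<in>UNIV. (if i = j then 1 else 0)) - (\<Sum>j\<in>UNIV. \<epsilon> * (if i = j then s i else 0)) + (\<Sum>j\<in>UNIV. \<epsilon> * (w $ j * A $ i $ j))"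
      unfolding Wij2 by (simp only: sum.distrib sum_subtractf)
    also have "\<dots> = 1 - \<epsilon> * s i + \<epsilon> * s i"
    proof -
      have e1: "(\<Sum>j\<in>UNIV. \<epsilon> * (if i = j then s i else 0)) = \<epsilon> * s i"
        by (simp add: if_distrib cong: if_cong)
      have e2: "(\<Sum>j\<in>UNIV. \<epsilon> * (w $ j * A $ i $ j)) = \<epsilon> * s i"
        unfolding s_eq sum_distrib_left by (simp add: mult.commute)
      show ?thesis unfolding e1 e2 by simp
    qed
    finally show ?thesis by simp
  qed
  have left: "w v* W = w"
  proof -
    have "(\<Sum>i\<in>UNIV. w $ i * W $ i $ j) = w $ j" for j
    proof -
      have sym: "(\<Sum>i\<in>UNIV. w $ j * A $ i $ j * w $ i) = w $ j * s j"
        unfolding s_eq sum_distrib_left using adj by (intro sum.cong refl) (metis mult.assoc)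
      have "(\<Sum>i\<in>UNIV. w $ i * W $ i $ j) = (\<Sum>i\<in>UNIV. w $ i * (if i = j then 1 else 0)) - (\<Sum>i\<in>UNIV. w $ i * (\<epsilon> * (if i = j then s i else 0))) + \<epsilon> * (\<Sum>i\<in>UNIV. w $ j * A $ i $ j * w $ i)"
      proof -
        have "(\<Sum>i\<in>UNIV. w $ i * W $ i $ j) = (\<Sum>i\<in>UNIV. w $ i * (if i = j then 1 else 0) - w $ i * (\<epsilon> * (if i = j then s i else 0)) + \<epsilon> * (w $ j * A $ i $ j * w $ i))"
          by (rule sum.cong) (simp_all only: Wij2 algebra_simps)
        also have "\<dots> = (\<Sum>i\<in>UNIV. w $ i * (if i = j then 1 else 0)) - (\<Sum>i\<in>UNIV. w $ i * (\<epsilon> * (if i = j then s i else 0))) + \<epsilon> * (\<Sum>i\<in>UNIV. w $ j * A $ i $ j * w $ i)"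
          by (simp only: sum.distrib sum_subtractf sum_distrib_left)
        finally show ?thesis .
      qed
      also have "\<dots> = w $ j - w $ j * (\<epsilon> * s j) + \<epsilon> * (w $ j * s j)"
        unfolding sym by (simp add: if_distrib cong: if_cong)
      finally show ?thesis by simp
    qed
    then show ?thesis by (simp add: vector_matrix_mult_def vec_eq_iff)
  qed
  have right: "W *v vec 1 = vec 1"
    using row by (simp add: matrix_vector_mult_def vec_eq_iff)
  have eig: "cmod \<mu> \<le> 1" if evA: "is_eigenvalue W \<mu>" for \<mu>
  proof -
    obtain v :: "complex^'n" where vv: "v \<noteq> 0 \<and> complex_matrix W *v v = \<mu> *s v"
      using evA unfolding is_eigenvalue_def by blast
    have v0: "v \<noteq> 0" using vv by (rule conjunct1)
    have ev: "complex_matrix W *v v = \<mu> *s v" using vv by (rule conjunct2)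
    define m where "m = Max (range (\<lambda>j. cmod (v $ j)))"
    have "m \<in> range (\<lambda>j. cmod (v $ j))" unfolding m_def by (rule Max_in) auto
    then obtain i where mi: "m = cmod (v $ i)" by blast
    have mj: "cmod (v $ j) \<le> m" for j unfolding m_def by simp
    have mpos: "m > 0"
    proof (rule ccontr)
      assume "\<not> m > 0"
      then have "v $ j = 0" for j using mj[of j] by (smt (verit) norm_ge_zero norm_eq_zero)
      then show False using v0 by (simp add: vec_eq_iff)
    qed
    have "\<mu> * v $ i = (\<Sum>j\<in>UNIV. complex_of_real (W $ i $ j) * v $ j)"
      using arg_cong[OF ev, of "\<lambda>x. x $ i"]
      by (simp add: matrix_vector_mult_def complex_matrix_def)
    then have "cmod \<mu> * m = cmod (\<Sum>j\<in>UNIV. complex_of_real (W $ i $ j) * v $ j)"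
      using mi by (metis norm_mult)
    also have "\<dots> \<le> (\<Sum>j\<in>UNIV. cmod (complex_of_real (W $ i $ j) * v $ j))"
      by (rule norm_sum)
    also have "\<dots> \<le> (\<Sum>j\<in>UNIV. W $ i $ j * m)"
    proof (rule sum_mono)
      fix j
      have "W $ i $ j \<ge> 0" using nn unfolding nonneg_matrix_def by simp
      then show "cmod (complex_of_real (W $ i $ j) * v $ j) \<le> W $ i $ j * m"
        using mj[of j] by (simp add: norm_mult mult_left_mono)
    qed
    also have "\<dots> = m" using row[of i] by (simp add: sum_distrib_right[symmetric])
    finally show ?thesis using mpos by simp
  qed
  have prim: "primitive_matrix W"
  proof -
    have "\<forall>p. \<exists>n. p \<in> R ^^ n"
    proof
      fix p :: "'n \<times> 'n"
      have "p \<in> R\<^sup>*" using assms(3) unfolding connected_graph_def R_def by (cases p) simp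
      then show "\<exists>n. p \<in> R ^^ n" by (rule rtrancl_imp_relpow)
    qed
    then obtain f where f: "\<And>p. p \<in> R ^^ f p" by metis
    define k where "k = Suc (Max (range f))"
    have "\<forall>i j. matpow W k $ i $ j > 0"
    proof (intro allI)
      fix i j
      have "f (i, j) \<le> k" unfolding k_def by (simp add: le_SucI)
      then show "matpow W k $ i $ j > 0"
        using matpow_pos[OF nn diag edge f[of "(i,j)"]] by blast
    qed
    then show ?thesis unfolding primitive_matrix_def k_def using nn by blast
  qed
  show ?thesis using nn left right eig prim unfolding W_def by blast
qed

end
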